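(* Let $G$ be a non-complete double-critical $k$-chromatic graph. Then no two vertices of degree $k+1$ are adjacent in $G$.
   Context: All graphs are finite and simple. A graph $G$ is (vertex-)critical if $\chi(G-v)<\chi(G)$ for every vertex $v\in V(G)$. A critical graph $G$ is double-critical if $\chi(G-x-y)\le\chi(G)-2$ for every edge $xy\in E(G)$. *)

theory Defs
  imports Main
begin

definition graph :: "'a set \<Rightarrow> 'a set set \<Rightarrow> bool" where
  "graph V E \<longleftrightarrow> finite V \<and> (\<forall>e\<in>E. e \<subseteq> V \<and> card e = 2)"

definition adj :: "'a set set \<Rightarrow> 'a \<Rightarrow> 'a \<Rightarrow> bool" where
  "adj E x y \<longleftrightarrow> {x, y} \<in> E"

definition degree :: "'a set \<Rightarrow> 'a set set \<Rightarrow> 'a \<Rightarrow> nat" where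
  "degree V E v = card {u \<in> V. adj E v u}"

definition complete_graph :: "'a set \<Rightarrow> 'a set set \<Rightarrow> bool" where
  "complete_graph V E \<longleftrightarrow> (\<forall>x\<in>V. \<forall>y\<in>V. x \<noteq> y \<longrightarrow> adj E x y)"

definition proper_colouring :: "'a set \<Rightarrow> 'a set set \<Rightarrow> nat \<Rightarrow> ('a \<Rightarrow> nat) \<Rightarrow> bool" where
  "proper_colouring V E k f \<longleftrightarrow>
     (\<forall>v\<in>V. f v < k) \<and> (\<forall>x\<in>V. \<forall>y\<in>V. adj E x y \<longrightarrow> f x \<noteq> f y)"

definition colourable :: "'a set \<Rightarrow> 'a set set \<Rightarrow> nat \<Rightarrow> bool" where
  "colourable V E k \<longleftrightarrow> (\<exists>f. proper_colouring V E k f)"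

definition chromatic_number :: "'a set \<Rightarrow> 'a set set \<Rightarrow> nat" where
  "chromatic_number V E = (LEAST k. colourable V E k)"

definition del_verts_V :: "'a set \<Rightarrow> 'a set \<Rightarrow> 'a set" where
  "del_verts_V V S = V - S"

definition del_verts_E :: "'a set set \<Rightarrow> 'a set \<Rightarrow> 'a set set" where
  "del_verts_E E S = {e \<in> E. e \<inter> S = {}}"

definition vertex_critical :: "'a set \<Rightarrow> 'a set set \<Rightarrow> bool" where
  "vertex_critical V E \<longleftrightarrow>
     (\<forall>v\<in>V. chromatic_number (del_verts_V V {v}) (del_verts_E E {v}) < chromatic_number V E)"

definition double_critical :: "'a set \<Rightarrow> 'a set set \<Rightarrow> bool" where
  "double_critical V E \<longleftrightarrow> vertex_critical V E \<and>
     (\<forall>x\<in>V. \<forall>y\<in>V. adj E x y \<longrightarrow>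
        chromatic_number (del_verts_V V {x, y}) (del_verts_E E {x, y}) + 2 \<le> chromatic_number V E)"

end

theory Submission
  imports Defs
begin

lemma colourable_card:
  assumes "finite W" "\<And>u. \<not> adj F u u"
  shows "colourable W F (card W)"
proof -
  obtain f :: "_ \<Rightarrow> nat" and n where f: "f ` W = {i. i < n}" "inj_on f W"
    using finite_imp_inj_to_nat_seg[OF assms(1)] by blast
  have "card (f ` W) = card W" using f(2) by (rule card_image)
  hence "n = card W" using f(1) by simp
  have "proper_colouring W F (card W) f"
    unfolding proper_colouring_def
  proof safe
    fix v assume "v \<in> W" thus "f v < card W" using f \<open>n = card W\<close> by auto
  next
    fix u v assume "u \<in> W" "v \<in> W" "adj F u v" "f u = f v"
    hence "u = v" using f(2) inj_onD by fastforce
    thus False using assms(2) \<open>adj F u v\<close> by simp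
  qed
  thus ?thesis unfolding colourable_def by blast
qed

lemma col_mono: "colourable W F j \<Longrightarrow> j \<le> j' \<Longrightarrow> colourable W F j'"
proof -
  assume "colourable W F j" "j \<le> j'"
  then obtain f where "proper_colouring W F j f" unfolding colourable_def by blast
  hence "proper_colouring W F j' f" using \<open>j \<le> j'\<close> unfolding proper_colouring_def
    using order_less_le_trans by blast
  thus ?thesis unfolding colourable_def by blast
qed

lemma chi_le: "colourable W F j \<Longrightarrow> chromatic_number W F \<le> j"
  unfolding chromatic_number_def by (rule Least_le)

lemma chi_col: "colourable W F j \<Longrightarrow> colourable W F (chromatic_number W F)"
  unfolding chromatic_number_def by (rule LeastI)

locale dcg =
  fixes V :: "'a set" and E :: "'a set set" and k :: nat
  assumes gr: "graph V E"
    and dc: "double_critical V E"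
    and chi: "chromatic_number V E = k"
begin

definition N where "N v = {u \<in> V. adj E v u}"
definition nn where "nn v z = {w \<in> N v. w \<noteq> z \<and> \<not> adj E z w}"

lemma finV: "finite V" using gr by (simp add: graph_def)
lemma finN: "finite (N v)" using finV by (simp add: N_def)
lemma adj_sym: "adj E a b = adj E b a" by (simp add: adj_def insert_commute)
lemma adj_irrefl: "\<not> adj E a a" using gr unfolding adj_def graph_def by fastforce
lemma adj_V: "adj E a b \<Longrightarrow> a \<in> V \<and> b \<in> V" using gr by (auto simp: adj_def graph_def)
lemma adj_neq: "adj E a b \<Longrightarrow> a \<noteq> b" using adj_irrefl by blast
lemma N_iff: "u \<in> N v \<longleftrightarrow> adj E v u" using adj_V by (auto simp: N_def)

lemma not_col: "colourable V E j \<Longrightarrow> k \<le> j"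
  using chi chi_le by blast

lemma edge_col:
  assumes "adj E x y"
  shows "2 \<le> k \<and> (\<exists>f. (\<forall>v\<in>V-{x,y}. f v < k-2) \<and>
     (\<forall>u\<in>V-{x,y}. \<forall>v\<in>V-{x,y}. adj E u v \<longrightarrow> f u \<noteq> f v))"
proof -
  have xy: "x \<in> V" "y \<in> V" using adj_V assms by auto
  let ?V = "del_verts_V V {x,y}" and ?E = "del_verts_E E {x,y}"
  have le: "chromatic_number ?V ?E + 2 \<le> k"
  proof -
    have "\<forall>x\<in>V. \<forall>y\<in>V. adj E x y \<longrightarrow>
        chromatic_number (del_verts_V V {x, y}) (del_verts_E E {x, y}) + 2 \<le> chromatic_number V E"
      using dc unfolding double_critical_def by blast
    thus ?thesis using xy assms chi by blast
  qed
  have "colourable ?V ?E (card ?V)"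
  proof (rule colourable_card)
    show "finite ?V" using finV by (simp add: del_verts_V_def)
    fix u show "\<not> adj ?E u u" using adj_irrefl[of u] by (simp add: adj_def del_verts_E_def)
  qed
  hence "colourable ?V ?E (chromatic_number ?V ?E)" by (rule chi_col)
  hence "colourable ?V ?E (k-2)" by (rule col_mono) (use le in linarith)
  then obtain f where f: "proper_colouring ?V ?E (k-2) f" unfolding colourable_def by blast
  have "\<forall>u\<in>V-{x,y}. \<forall>v\<in>V-{x,y}. adj E u v \<longrightarrow> f u \<noteq> f v"
  proof (intro ballI impI)
    fix u v assume uv: "u \<in> V-{x,y}" "v \<in> V-{x,y}" "adj E u v"
    hence "adj ?E u v" by (auto simp: adj_def del_verts_E_def)
    thus "f u \<noteq> f v" using f uv unfolding proper_colouring_def del_verts_V_def by blast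
  qed
  moreover have "\<forall>v\<in>V-{x,y}. f v < k-2" using f unfolding proper_colouring_def del_verts_V_def by blast
  ultimately show ?thesis using le by (intro conjI exI[of _ f]) simp_all
qed


definition col2 where "col2 x y f \<longleftrightarrow> (\<forall>v\<in>V-{x,y}. f v < k-2) \<and>
     (\<forall>u\<in>V-{x,y}. \<forall>v\<in>V-{x,y}. adj E u v \<longrightarrow> f u \<noteq> f v)"

lemma adjs: "adj E a b \<Longrightarrow> adj E b a" using adj_sym by blast

lemma k2: "adj E x y \<Longrightarrow> 2 \<le> k" using edge_col by blast

lemma ex_col2: "adj E x y \<Longrightarrow> \<exists>f. col2 x y f" using edge_col unfolding col2_def by blast

lemma recol:
  assumes "\<forall>v\<in>V. g v < k-1" "\<forall>u\<in>V. \<forall>v\<in>V. adj E u v \<longrightarrow> g u \<noteq> g v" "2 \<le> k"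
  shows False
proof -
  have "colourable V E (k-1)" unfolding colourable_def proper_colouring_def using assms by blast
  thus False using not_col assms(3) by fastforce
qed

lemma RL1:
  assumes xy: "adj E x y" and f: "col2 x y f" and i: "i < k-2"
    and nc: "\<not>(\<exists>c\<in>V-{x,y}. f c = i \<and> adj E x c \<and> adj E y c)"
  shows False
proof -
  have kk: "2 \<le> k" using k2 xy by blast
  have fb: "\<forall>v\<in>V-{x,y}. f v < k-2" and fp: "\<forall>u\<in>V-{x,y}. \<forall>v\<in>V-{x,y}. adj E u v \<longrightarrow> f u \<noteq> f v"
    using f unfolding col2_def by auto
  have xyV: "x \<in> V" "y \<in> V" "x \<noteq> y" using adj_V adj_neq xy by auto
  define g where "g v = (if v = x then i else if v = y then k-2 else if adj E x v \<and> f v = i then k-2 else f v)" for v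
  show False
  proof (rule recol[of g])
    show "\<forall>v\<in>V. g v < k-1"
    proof
      fix v assume "v \<in> V"
      have "v \<in> V - {x,y} \<longrightarrow> f v < k-2" using fb by blast
      thus "g v < k-1" using \<open>v \<in> V\<close> i kk by (auto simp: g_def)
    qed
    show "2 \<le> k" by (rule kk)
    show "\<forall>u\<in>V. \<forall>v\<in>V. adj E u v \<longrightarrow> g u \<noteq> g v"
    proof (intro ballI impI)
      fix u v assume uv: "u \<in> V" "v \<in> V" "adj E u v"
      have uvn: "u \<noteq> v" using uv adj_neq by blast
      show "g u \<noteq> g v"
      proof (cases "u \<in> {x,y}")
        case True
        show ?thesis
        proof (cases "v \<in> {x,y}")
          case True
          thus ?thesis using \<open>u \<in> {x,y}\<close> uvn xyV i by (auto simp: g_def)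
        next
          case False
          hence vV: "v \<in> V - {x,y}" using uv by auto
          have fv0: "f v < k-2" using fb vV by blast
          hence fv: "f v < k-2" "f v \<noteq> k-2" "k-2 \<noteq> f v" by auto
          show ?thesis
          proof (cases "u = x")
            case True
            thus ?thesis using False uv i fb vV fv by (auto simp: g_def)
          next
            case False
            hence "u = y" using \<open>u \<in> {x,y}\<close> by auto
            thus ?thesis using vV fv uv nc fb i xyV by (auto simp: g_def)
          qed
        qed
      next
        case False
        hence uV: "u \<in> V - {x,y}" using uv by auto
        have fu0: "f u < k-2" using fb uV by blast
        hence fu: "f u < k-2" "f u \<noteq> k-2" "k-2 \<noteq> f u" by auto
        show ?thesis
        proof (cases "v \<in> {x,y}")
          case True
          show ?thesis
          proof (cases "v = x")
            case True
            thus ?thesis using uV fu uv i fb by (auto simp: g_def adj_sym[of u x])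
          next
            case False
            hence "v = y" using \<open>v \<in> {x,y}\<close> by auto
            thus ?thesis using uV fu uv nc fb i xyV by (auto simp: g_def adj_sym[of u y])
          qed
        next
          case False
          hence vV: "v \<in> V - {x,y}" using uv by auto
          have fv0: "f v < k-2" using fb vV by blast
          hence fv: "f v < k-2" "f v \<noteq> k-2" "k-2 \<noteq> f v" by auto
          have "f u \<noteq> f v" using fp uV vV uv by blast
          thus ?thesis using uV fu vV fv fb by (auto simp: g_def)
        qed
      qed
    qed
  qed
qed

lemma RL2:
  assumes xy: "adj E x y" and f: "col2 x y f" and i: "i < k-2" and j: "j < k-2" and ij: "i \<noteq> j"
    and ind: "\<forall>u\<in>V-{x,y}. \<forall>v\<in>V-{x,y}. ((f u = i \<and> adj E x u) \<or> (f u = j \<and> adj E y u)) \<longrightarrow>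
               ((f v = i \<and> adj E x v) \<or> (f v = j \<and> adj E y v)) \<longrightarrow> \<not> adj E u v"
  shows False
proof -
  have kk: "2 \<le> k" using k2 xy by blast
  have fb: "\<forall>v\<in>V-{x,y}. f v < k-2" and fp: "\<forall>u\<in>V-{x,y}. \<forall>v\<in>V-{x,y}. adj E u v \<longrightarrow> f u \<noteq> f v"
    using f unfolding col2_def by auto
  have xyV: "x \<in> V" "y \<in> V" "x \<noteq> y" using adj_V adj_neq xy by auto
  define S where "S v \<longleftrightarrow> (f v = i \<and> adj E x v) \<or> (f v = j \<and> adj E y v)" for v
  define g where "g v = (if v = x then i else if v = y then j else if S v then k-2 else f v)" for v
  show False
  proof (rule recol[of g])
    show "\<forall>v\<in>V. g v < k-1"
    proof
      fix v assume "v \<in> V"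
      have "v \<in> V - {x,y} \<longrightarrow> f v < k-2" using fb by blast
      thus "g v < k-1" using \<open>v \<in> V\<close> i j kk by (auto simp: g_def)
    qed
    show "2 \<le> k" by (rule kk)
    show "\<forall>u\<in>V. \<forall>v\<in>V. adj E u v \<longrightarrow> g u \<noteq> g v"
    proof (intro ballI impI)
      fix u v assume uv: "u \<in> V" "v \<in> V" "adj E u v"
      have uvn: "u \<noteq> v" using uv adj_neq by blast
      show "g u \<noteq> g v"
      proof (cases "u \<in> {x,y}")
        case True
        show ?thesis
        proof (cases "v \<in> {x,y}")
          case True
          thus ?thesis using \<open>u \<in> {x,y}\<close> uvn xyV ij by (auto simp: g_def)
        next
          case False
          hence vV: "v \<in> V - {x,y}" using uv by auto
          have fv0: "f v < k-2" using fb vV by blast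
          hence fv: "f v < k-2" "f v \<noteq> k-2" "k-2 \<noteq> f v" by auto
          show ?thesis
          proof (cases "u = x")
            case True
            thus ?thesis using False uv i j fb vV fv by (auto simp: g_def S_def)
          next
            case False
            hence "u = y" using \<open>u \<in> {x,y}\<close> by auto
            thus ?thesis using vV fv uv fb i j xyV by (auto simp: g_def S_def)
          qed
        qed
      next
        case False
        hence uV: "u \<in> V - {x,y}" using uv by auto
        have fu0: "f u < k-2" using fb uV by blast
        hence fu: "f u < k-2" "f u \<noteq> k-2" "k-2 \<noteq> f u" by auto
        show ?thesis
        proof (cases "v \<in> {x,y}")
          case True
          show ?thesis
          proof (cases "v = x")
            case True
            thus ?thesis using uV fu uv i j fb by (auto simp: g_def S_def adj_sym[of u x])
          next
            case False
            hence "v = y" using \<open>v \<in> {x,y}\<close> by auto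
            thus ?thesis using uV fu uv fb i j xyV by (auto simp: g_def S_def adj_sym[of u y])
          qed
        next
          case False
          hence vV: "v \<in> V - {x,y}" using uv by auto
          have fv0: "f v < k-2" using fb vV by blast
          hence fv: "f v < k-2" "f v \<noteq> k-2" "k-2 \<noteq> f v" by auto
          have "f u \<noteq> f v" using fp uV vV uv by blast
          moreover have "\<not> (S u \<and> S v)" using ind uV vV uv unfolding S_def by blast
          ultimately show ?thesis using uV fu vV fv fb by (auto simp: g_def)
        qed
      qed
    qed
  qed
qed

lemma rep:
  assumes xz: "adj E x z" and f: "col2 x z f"
  shows "\<exists>c. \<forall>i<k-2. c i \<in> V-{x,z} \<and> f (c i) = i \<and> adj E x (c i) \<and> adj E z (c i)"
proof -
  have "\<forall>i<k-2. \<exists>c\<in>V-{x,z}. f c = i \<and> adj E x c \<and> adj E z c"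
    using RL1[OF xz f] by blast
  thus ?thesis by metis
qed

lemma count:
  assumes xz: "adj E x z"
  shows "k-2 \<le> card (N x \<inter> N z)"
proof -
  obtain f where f: "col2 x z f" using ex_col2 xz by blast
  obtain c where c: "\<forall>i<k-2. c i \<in> V-{x,z} \<and> f (c i) = i \<and> adj E x (c i) \<and> adj E z (c i)"
    using rep[OF xz f] by blast
  have "inj_on c {..<k-2}" by (rule inj_onI) (metis c lessThan_iff)
  moreover have "c ` {..<k-2} \<subseteq> N x \<inter> N z" using c by (auto simp: N_iff)
  ultimately have "card {..<k-2} \<le> card (N x \<inter> N z)"
    using card_inj_on_le finN by (metis finite_Int)
  thus ?thesis by simp
qed

lemma L3:
  assumes xz: "adj E x z" and w: "w \<in> V" "w \<noteq> x" "w \<noteq> z" "\<not>(adj E x w \<and> adj E z w)"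
  shows "\<exists>c\<in>N x \<inter> N z. c \<noteq> w \<and> \<not> adj E w c"
proof -
  obtain f where f: "col2 x z f" using ex_col2 xz by blast
  have wV: "w \<in> V - {x,z}" using w by auto
  hence "f w < k-2" using f unfolding col2_def by blast
  then obtain c where c: "c\<in>V-{x,z}" "f c = f w" "adj E x c" "adj E z c"
    using RL1[OF xz f] by blast
  have "c \<noteq> w" using c w by blast
  moreover have "\<not> adj E w c" using f c wV unfolding col2_def by metis
  ultimately show ?thesis using c by (auto simp: N_iff)
qed


lemma nn_sub: "nn x z \<subseteq> N x" by (auto simp: nn_def)
lemma fin_nn: "finite (nn x z)" by (rule finite_subset[OF nn_sub finN])
lemma nn_iff: "w \<in> nn x z \<longleftrightarrow> adj E x w \<and> w \<noteq> z \<and> \<not> adj E z w" by (auto simp: nn_def N_iff)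

lemma F1:
  assumes dx: "card (N x) = Suc k" and z: "z \<in> N x"
  shows "card (nn x z) \<le> 2"
proof -
  have xz: "adj E x z" using z N_iff by blast
  have eq: "nn x z = (N x - {z}) - (N x \<inter> N z)" by (auto simp: nn_def N_iff)
  have sub: "N x \<inter> N z \<subseteq> N x - {z}" using adj_irrefl by (auto simp: N_iff)
  have c1: "card (N x - {z}) = k" using dx z finN by simp
  have "card (nn x z) = card (N x - {z}) - card (N x \<inter> N z)"
    unfolding eq by (rule card_Diff_subset[OF finite_subset[OF sub] sub]) (simp add: finN)
  thus ?thesis using c1 count[OF xz] by linarith
qed

lemma F3:
  assumes dx: "card (N x) = Suc k" and z: "z \<in> N x"
  shows "card (nn x z) \<noteq> 1"
proof
  assume "card (nn x z) = 1"
  then obtain w where w: "nn x z = {w}" by (rule card_1_singletonE)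
  hence wi: "adj E x w" "w \<noteq> z" "\<not> adj E z w" using nn_iff by blast+
  have zV: "z \<in> V" "z \<noteq> x" using z adj_irrefl by (auto simp: N_def)
  have "\<not>(adj E x z \<and> adj E w z)" using wi adj_sym by blast
  then obtain c where c: "c \<in> N x \<inter> N w" "c \<noteq> z" "\<not> adj E z c"
    using L3[OF wi(1) zV(1) zV(2) wi(2)[symmetric]] by blast
  hence "c \<in> nn x z" by (auto simp: nn_def)
  hence "c = w" using w by blast
  thus False using c adj_irrefl by (auto simp: N_iff)
qed

lemma F2:
  assumes dx: "card (N x) = Suc k" and zwq: "z \<in> N x" "w \<in> N x" "q \<in> N x"
    and d: "z \<noteq> w" "z \<noteq> q" "w \<noteq> q"
    and na: "\<not> adj E z w" "\<not> adj E z q" "\<not> adj E w q"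
  shows False
proof -
  have sub: "{w,q} \<subseteq> nn x z" using zwq d na by (auto simp: nn_def)
  have "card {w,q} = 2" using d by simp
  hence "{w,q} = nn x z" using F1[OF dx zwq(1)]
    by (intro card_seteq[OF fin_nn sub]) linarith
  hence "nn x z = {w,q}" by simp
  have wi: "adj E x w" using zwq N_iff by blast
  have zV: "z \<in> V" "z \<noteq> x" using zwq adj_irrefl by (auto simp: N_def)
  have "\<not>(adj E x z \<and> adj E w z)" using na adj_sym by blast
  then obtain c where c: "c \<in> N x \<inter> N w" "c \<noteq> z" "\<not> adj E z c"
    using L3[OF wi zV(1) zV(2) d(1)] by blast
  hence "c \<in> nn x z" by (auto simp: nn_def)
  hence "c = w \<or> c = q" using \<open>nn x z = {w,q}\<close> by blast
  thus False using c na adj_irrefl by (auto simp: N_iff)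
qed

lemma nn2:
  assumes dx: "card (N x) = Suc k" and z: "z \<in> N x" and a: "a \<in> nn x z"
  shows "\<exists>b. nn x z = {a,b} \<and> b \<noteq> a"
proof -
  have "card (nn x z) \<noteq> 0" using a fin_nn by auto
  hence "card (nn x z) = 2" using F1[OF dx z] F3[OF dx z] by linarith
  then obtain p q where pq: "nn x z = {p,q}" "p \<noteq> q" unfolding card_2_iff by blast
  show ?thesis
  proof (cases "a = p")
    case True thus ?thesis using pq by blast
  next
    case False hence "a = q" using a pq by blast
    thus ?thesis using pq by (intro exI[of _ p]) (auto simp: insert_commute)
  qed
qed

lemma three:
  assumes "finite S" "2 < card S"
  shows "\<exists>a b c. a \<in> S \<and> b \<in> S \<and> c \<in> S \<and> a \<noteq> b \<and> a \<noteq> c \<and> b \<noteq> c"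
proof -
  have "S \<noteq> {}" using assms by (intro notI) simp
  then obtain a where a: "a \<in> S" by blast
  have "1 < card (S - {a})" using assms a by simp
  hence "S - {a} \<noteq> {}" by (intro notI) simp
  then obtain b where b: "b \<in> S - {a}" by blast
  have "0 < card (S - {a} - {b})" using assms a b by simp
  hence "S - {a} - {b} \<noteq> {}" by (intro notI) simp
  then obtain c where c: "c \<in> S - {a} - {b}" by blast
  show ?thesis using a b c by blast
qed

lemma two:
  assumes "finite S" "2 \<le> card S"
  shows "\<exists>a b. a \<in> S \<and> b \<in> S \<and> a \<noteq> b"
proof -
  have "S \<noteq> {}" using assms by (intro notI) simp
  then obtain a where a: "a \<in> S" by blast
  have "0 < card (S - {a})" using assms a by simp
  hence "S - {a} \<noteq> {}" by (intro notI) simp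
  then obtain b where b: "b \<in> S - {a}" by blast
  show ?thesis using a b by blast
qed

lemma F4:
  assumes dx: "card (N x) = Suc k" and ab: "a \<in> N x" "b \<in> N x" "adj E a b"
  shows "\<exists>p q r s. p \<in> N x - {a,b} \<and> q \<in> N x - {a,b} \<and> r \<in> N x - {a,b} \<and> s \<in> N x - {a,b} \<and>
     p \<noteq> q \<and> p \<noteq> r \<and> p \<noteq> s \<and> q \<noteq> r \<and> q \<noteq> s \<and> r \<noteq> s \<and> \<not> adj E p q \<and> \<not> adj E r s"
proof -
  obtain h where h: "col2 a b h" using ex_col2 ab by blast
  have hb: "\<forall>v\<in>V-{a,b}. h v < k-2" and hp: "\<forall>u\<in>V-{a,b}. \<forall>v\<in>V-{a,b}. adj E u v \<longrightarrow> h u \<noteq> h v"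
    using h unfolding col2_def by auto
  have hp': "\<And>u v. u \<in> V-{a,b} \<Longrightarrow> v \<in> V-{a,b} \<Longrightarrow> adj E u v \<Longrightarrow> h u \<noteq> h v"
    using hp by blast
  have xV: "x \<in> V - {a,b}" using ab adj_irrefl adj_V by (auto simp: N_def)
  define T where "T = N x - {a,b}"
  have finT: "finite T" using finN by (simp add: T_def)
  have TV: "T \<subseteq> V - {a,b}" by (auto simp: T_def N_def)
  have cT: "card T = k - 1" using dx ab adj_neq[OF ab(3)] finN by (simp add: T_def card_Diff_subset)
  have hx: "h x < k-2" using hb xV by blast
  have hT: "\<And>t. t \<in> T \<Longrightarrow> h t \<noteq> h x \<and> h t < k-2"
  proof -
    fix t assume t: "t \<in> T"
    hence "adj E x t" "t \<in> V-{a,b}" using TV by (auto simp: T_def N_iff)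
    hence "h x \<noteq> h t" using hp xV by blast
    thus "h t \<noteq> h x \<and> h t < k-2" using hb \<open>t \<in> V-{a,b}\<close> by auto
  qed
  define cl where "cl c = {t \<in> T. h t = c}" for c
  have cl2: "card (cl c) \<le> 2" for c
  proof (rule ccontr)
    assume "\<not> card (cl c) \<le> 2"
    hence "2 < card (cl c)" by simp
    moreover have "finite (cl c)" using finT by (simp add: cl_def)
    ultimately obtain p q r where pqr: "p \<in> cl c" "q \<in> cl c" "r \<in> cl c" "p \<noteq> q" "p \<noteq> r" "q \<noteq> r"
      using three by blast
    hence in1: "p \<in> N x" "q \<in> N x" "r \<in> N x" by (auto simp: cl_def T_def)
    have in2: "p \<in> V-{a,b}" "q \<in> V-{a,b}" "r \<in> V-{a,b}" "h p = c" "h q = c" "h r = c"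
      using pqr TV by (auto simp: cl_def)
    have "\<not> adj E p q" using hp'[OF in2(1) in2(2)] in2 by auto
    moreover have "\<not> adj E p r" using hp'[OF in2(1) in2(3)] in2 by auto
    moreover have "\<not> adj E q r" using hp'[OF in2(2) in2(3)] in2 by auto
    ultimately show False using F2[OF dx in1] pqr by blast
  qed
  define Col where "Col = h ` T"
  have finCol: "finite Col" using finT by (simp add: Col_def)
  have ColS: "Col \<subseteq> {..<k-2} - {h x}" using hT by (auto simp: Col_def)
  have cCol: "card Col \<le> k - 3"
  proof -
    have "card Col \<le> card ({..<k-2} - {h x})" using ColS by (intro card_mono) auto
    also have "\<dots> = k - 3" using hx by simp
    finally show ?thesis .
  qed
  have sumT: "card T = (\<Sum>c\<in>Col. card (cl c))"
  proof -
    have "card T = (\<Sum>t\<in>T. 1)" by simp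
    also have "\<dots> = (\<Sum>c\<in>h ` T. (\<Sum>t\<in>{t\<in>T. h t = c}. 1))"
      by (rule sum.image_gen[OF finT])
    finally show ?thesis by (simp add: Col_def cl_def)
  qed
  define D2 where "D2 = {c \<in> Col. card (cl c) = 2}"
  have e1: "(\<Sum>c\<in>Col. (if card (cl c) = 2 then 1 else 0)) = card D2"
    unfolding D2_def using sum.inter_filter[OF finCol, of "\<lambda>_. (1::nat)" "\<lambda>c. card (cl c) = 2"] by simp
  have "(\<Sum>c\<in>Col. card (cl c)) \<le> (\<Sum>c\<in>Col. (1::nat)) + (\<Sum>c\<in>Col. (if card (cl c) = 2 then 1 else 0))"
    unfolding sum.distrib[symmetric]
  proof (rule sum_mono)
    fix c assume "c \<in> Col"
    show "card (cl c) \<le> 1 + (if card (cl c) = 2 then 1 else 0)" using cl2[of c] by auto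
  qed
  hence "(\<Sum>c\<in>Col. card (cl c)) \<le> card Col + card D2" using e1 by simp
  hence "k - 1 \<le> card Col + card D2" using sumT cT by simp
  hence "2 \<le> card D2" using cCol hx by linarith
  moreover have "finite D2" using finCol by (simp add: D2_def)
  ultimately obtain c1 c2 where c12: "c1 \<in> D2" "c2 \<in> D2" "c1 \<noteq> c2"
    using two by blast
  have "card (cl c1) = 2" "card (cl c2) = 2" using c12 by (auto simp: D2_def)
  then obtain p q r s where pq: "cl c1 = {p,q}" "p \<noteq> q" and rs: "cl c2 = {r,s}" "r \<noteq> s"
    unfolding card_2_iff by blast
  have hv: "h p = c1" "h q = c1" "h r = c2" "h s = c2" "p \<in> T" "q \<in> T" "r \<in> T" "s \<in> T"
    using pq rs by (auto simp: cl_def)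
  have inV: "p \<in> V-{a,b}" "q \<in> V-{a,b}" "r \<in> V-{a,b}" "s \<in> V-{a,b}" using hv TV by auto
  have "\<not> adj E p q" using hp'[OF inV(1) inV(2)] hv by auto
  moreover have "\<not> adj E r s" using hp'[OF inV(3) inV(4)] hv by auto
  moreover have "p \<noteq> r" "p \<noteq> s" "q \<noteq> r" "q \<noteq> s" using hv c12 by auto
  ultimately show ?thesis using hv pq rs unfolding T_def by blast
qed

end


context dcg
begin

lemma col2_sym: "col2 x y f = col2 y x f" unfolding col2_def by (simp add: insert_commute)

lemma nn_eq2:
  assumes dx: "card (N x) = Suc k" and z: "z \<in> N x" and p: "p \<in> nn x z" and q: "q \<in> nn x z" and pq: "p \<noteq> q"
  shows "nn x z = {p,q}"
proof -
  have sub: "{p,q} \<subseteq> nn x z" using p q by blast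
  have "card {p,q} = 2" using pq by simp
  hence "{p,q} = nn x z" using F1[OF dx z] by (intro card_seteq[OF fin_nn sub]) linarith
  thus ?thesis by simp
qed

end

locale edge = dcg +
  fixes x y f c
  assumes xy: "adj E x y" and dx: "card (N x) = Suc k" and dy: "card (N y) = Suc k"
    and f: "col2 x y f"
    and c: "\<forall>i<k-2. c i \<in> V-{x,y} \<and> f (c i) = i \<and> adj E x (c i) \<and> adj E y (c i)"
begin

lemma fb: "v \<in> V - {x,y} \<Longrightarrow> f v < k-2" using f unfolding col2_def by blast
lemma fp: "u \<in> V-{x,y} \<Longrightarrow> v \<in> V-{x,y} \<Longrightarrow> adj E u v \<Longrightarrow> f u \<noteq> f v"
  using f unfolding col2_def by blast
lemma xyV: "x \<in> V" "y \<in> V" "x \<noteq> y" using xy adj_V adj_neq by auto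
lemma kk: "2 \<le> k" using k2 xy by blast
lemma yN: "y \<in> N x" using xy N_iff by blast
lemma xN: "x \<in> N y" using xy N_iff adj_sym by blast

lemma sw: "edge V E k y x f c"
proof -
  have "col2 y x f" using f col2_sym by blast
  moreover have "\<forall>i<k-2. c i \<in> V-{y,x} \<and> f (c i) = i \<and> adj E y (c i) \<and> adj E x (c i)"
    using c by (auto simp: insert_commute)
  moreover have "adj E y x" using xy adj_sym by blast
  ultimately show ?thesis unfolding edge_def edge_axioms_def using dcg_axioms dx dy by blast
qed

lemma NV: "v \<in> N x \<Longrightarrow> v \<noteq> y \<Longrightarrow> v \<in> V - {x,y}"
  using adj_irrefl by (auto simp: N_def)

lemma crep: "a \<in> V-{x,y} \<Longrightarrow> c (f a) \<in> V - {x,y} \<and> f (c (f a)) = f a \<and> adj E x (c (f a)) \<and> adj E y (c (f a))"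
  using c fb by blast

lemma cardA: "card (nn x y) = k - card (N x \<inter> N y)"
proof -
  have eq: "nn x y = (N x - {y}) - (N x \<inter> N y)" by (auto simp: nn_def N_iff)
  have sub: "N x \<inter> N y \<subseteq> N x - {y}" using adj_irrefl by (auto simp: N_iff)
  have c1: "card (N x - {y}) = k" using dx yN finN by simp
  have "card (nn x y) = card (N x - {y}) - card (N x \<inter> N y)"
    unfolding eq by (rule card_Diff_subset[OF finite_subset[OF sub] sub]) (simp add: finN)
  thus ?thesis using c1 by simp
qed

lemma cardCm: "card (N x \<inter> N y) \<le> k"
proof -
  have sub: "N x \<inter> N y \<subseteq> N x - {y}" using adj_irrefl by (auto simp: N_iff)
  have c1: "card (N x - {y}) = k" using dx yN finN by simp
  show ?thesis using card_mono[OF _ sub] c1 finN by (metis finite_Diff)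
qed

lemma cardAB: "card (nn x y) = card (nn y x)"
proof -
  interpret s: edge V E k y x f c by (rule sw)
  show ?thesis using cardA s.cardA by (simp add: Int_commute)
qed

lemma cases02: "card (nn x y) = 0 \<or> card (nn x y) = 2"
  using F1[OF dx yN] F3[OF dx yN] by linarith

lemma inA: "a \<in> nn x y \<Longrightarrow> adj E x a \<and> a \<noteq> y \<and> \<not> adj E y a \<and> a \<in> V-{x,y} \<and> a \<in> N x"
  using NV by (auto simp: nn_iff N_iff)

lemma adjA: "a \<in> nn x y \<Longrightarrow> a' \<in> nn x y \<Longrightarrow> a \<noteq> a' \<Longrightarrow> adj E a a'"
proof (rule ccontr)
  assume a: "a \<in> nn x y" "a' \<in> nn x y" "a \<noteq> a'" "\<not> adj E a a'"
  have "a \<in> N x" "a' \<in> N x" using a inA by auto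
  moreover have "y \<noteq> a" "y \<noteq> a'" "\<not> adj E y a" "\<not> adj E y a'" using a inA by auto
  ultimately show False using F2[OF dx yN] a by blast
qed

lemma G1: "a \<in> nn x y \<Longrightarrow> nn x (a) = {y, c (f a)} \<and> c (f a) \<noteq> a \<and> \<not> adj E a (c (f a))"
proof -
  assume a: "a \<in> nn x y"
  note ai = inA[OF a]
  have cr: "c (f a) \<in> V - {x,y}" "f (c (f a)) = f a" "adj E x (c (f a))" "adj E y (c (f a))"
    using crep ai by auto
  have ne: "c (f a) \<noteq> a" using cr ai by auto
  have na: "\<not> adj E a (c (f a))" using fp[of a "c (f a)"] cr ai by auto
  have "y \<in> nn x a" using ai xy adj_sym by (auto simp: nn_iff)
  moreover have "c (f a) \<in> nn x a" using cr ne na by (auto simp: nn_iff)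
  moreover have "y \<noteq> c (f a)" using cr by auto
  ultimately have "nn x a = {y, c (f a)}" using nn_eq2[OF dx] ai by blast
  thus ?thesis using ne na by blast
qed

lemma G2: "a \<in> nn x y \<Longrightarrow> a' \<in> nn x y \<Longrightarrow> a \<noteq> a' \<Longrightarrow> c (f a) \<noteq> c (f a')"
proof
  assume a: "a \<in> nn x y" "a' \<in> nn x y" "a \<noteq> a'" "c (f a) = c (f a')"
  have "f (c (f a)) = f a" using crep inA a(1) by blast
  moreover have "f (c (f a')) = f a'" using crep inA a(2) by blast
  moreover have "f (c (f a)) = f (c (f a'))" by (rule arg_cong[OF a(4)])
  ultimately have "f a = f a'" by linarith
  moreover have "adj E a a'" using adjA a by blast
  ultimately show False using fp inA a by blast
qed

end


locale edgeI = edge +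
  assumes cA: "card (nn x y) = 2"
begin

lemma swI: "edgeI V E k y x f c"
  unfolding edgeI_def edgeI_axioms_def using sw cA cardAB by simp

lemma cCm: "card (N x \<inter> N y) = k - 2"
  using cardA cA cardCm by linarith

lemma img: "c ` {..<k-2} = N x \<inter> N y"
proof -
  have sub: "c ` {..<k-2} \<subseteq> N x \<inter> N y" using c by (auto simp: N_iff)
  have inj: "inj_on c {..<k-2}"
  proof (rule inj_onI)
    fix i j assume ij: "i \<in> {..<k-2}" "j \<in> {..<k-2}" "c i = c j"
    have "f (c i) = i" using c ij(1) by auto
    moreover have "f (c j) = j" using c ij(2) by auto
    moreover have "f (c i) = f (c j)" by (rule arg_cong[OF ij(3)])
    ultimately show "i = j" by linarith
  qed
  have "card (c ` {..<k-2}) = k - 2" using card_image[OF inj] by simp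
  hence "card (N x \<inter> N y) \<le> card (c ` {..<k-2})" using cCm by simp
  moreover have "finite (N x \<inter> N y)" using finN by simp
  ultimately show ?thesis using card_seteq[OF _ sub] by blast
qed

lemma uniq: "u \<in> N x \<inter> N y \<Longrightarrow> c (f u) = u"
proof -
  assume "u \<in> N x \<inter> N y"
  hence "u \<in> c ` {..<k-2}" using img by simp
  then obtain i where i: "i < k-2" "u = c i" by blast
  hence "f u = i" using c by blast
  thus ?thesis using i by simp
qed

lemma claim: "a \<in> nn x y \<Longrightarrow> c (f a) \<in> c ` f ` nn y x"
proof (rule ccontr)
  interpret s: edge V E k y x f c by (rule sw)
  assume a: "a \<in> nn x y" and nc: "c (f a) \<notin> c ` f ` nn y x"
  define cc where "cc = c (f a)"
  note ai = inA[OF a]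
  have cr: "cc \<in> V - {x,y}" "f cc = f a" "adj E x cc" "adj E y cc"
    using crep ai unfolding cc_def by auto
  have g1: "nn x a = {y, cc}" "cc \<noteq> a" "\<not> adj E a cc" using G1[OF a] unfolding cc_def by auto
  have ccN: "cc \<in> N x" "cc \<in> N y" using cr by (auto simp: N_iff)
  have "a \<in> nn x cc" using ai g1 adj_sym by (auto simp: nn_iff)
  then obtain w where w: "nn x cc = {a, w}" "w \<noteq> a" using nn2[OF dx ccN(1)] by blast
  have wi: "adj E x w" "w \<noteq> cc" "\<not> adj E cc w" using w nn_iff by blast+
  have wy: "w \<noteq> y" using wi(3) adjs[OF cr(4)] by blast
  have wA: "w \<notin> nn x y"
  proof
    assume wA: "w \<in> nn x y"
    have "cc \<in> nn x w" using cr wi adj_sym by (auto simp: nn_iff)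
    hence "cc = y \<or> cc = c (f w)" using G1[OF wA] by blast
    thus False using cr G2[OF a wA] w(2) unfolding cc_def by auto
  qed
  have wy2: "adj E y w" using wA wi wy by (auto simp: nn_iff)
  have "nn y cc = {w}"
  proof
    show "{w} \<subseteq> nn y cc" using wy2 wi by (auto simp: nn_iff)
    show "nn y cc \<subseteq> {w}"
    proof
      fix v assume v: "v \<in> nn y cc"
      hence vi: "adj E y v" "v \<noteq> cc" "\<not> adj E cc v" using nn_iff by blast+
      have vx: "v \<noteq> x" using vi cr adj_sym by blast
      show "v \<in> {w}"
      proof (cases "adj E x v")
        case True
        hence "v \<in> nn x cc" using vi by (auto simp: nn_iff)
        hence "v = a \<or> v = w" using w by blast
        thus ?thesis using ai vi by auto
      next
        case False
        hence vB: "v \<in> nn y x" using vi vx by (auto simp: nn_iff)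
        have "cc \<in> nn y v" using cr vi False adj_sym by (auto simp: nn_iff)
        hence "cc = x \<or> cc = c (f v)" using s.G1[OF vB] by blast
        thus ?thesis using cr nc vB unfolding cc_def by auto
      qed
    qed
  qed
  hence "card (nn y cc) = 1" by simp
  thus False using F3[OF dy ccN(2)] by simp
qed

lemma AeqB: "c ` f ` nn x y = c ` f ` nn y x"
proof -
  interpret s: edgeI V E k y x f c by (rule swI)
  show ?thesis using claim s.claim by blast
qed

lemma Kf:
  assumes u: "u \<in> N x \<inter> N y" and v: "v \<in> N x \<inter> N y" and uv: "u \<noteq> v" "\<not> adj E u v"
  shows "u \<in> c ` f ` nn x y \<or> v \<in> c ` f ` nn x y"
proof (rule ccontr)
  assume nc: "\<not> (u \<in> c ` f ` nn x y \<or> v \<in> c ` f ` nn x y)"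
  have uV: "u \<in> V - {x,y}" and vV: "v \<in> V - {x,y}" using u v NV adj_irrefl by (auto simp: N_iff)
  have fu: "f u < k-2" "f v < k-2" using fb uV vV by auto
  have cu: "c (f u) = u" "c (f v) = v" using uniq u v by auto
  have fuv: "f u \<noteq> f v"
  proof
    assume "f u = f v"
    hence "c (f u) = c (f v)" by simp
    thus False using cu uv by simp
  qed
  have S: "t \<in> {u,v}" if t: "t \<in> V-{x,y}" "(f t = f u \<and> adj E x t) \<or> (f t = f v \<and> adj E y t)" for t
  proof (cases "f t = f u \<and> adj E x t")
    case True
    hence ft: "f t = f u" "adj E x t" by auto
    show ?thesis
    proof (cases "adj E y t")
      case True
      hence "t \<in> N x \<inter> N y" using ft by (simp add: N_iff)
      hence "t = c (f t)" using uniq by simp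
      also have "\<dots> = c (f u)" by (simp only: ft(1))
      also have "\<dots> = u" by (rule cu(1))
      finally show ?thesis by simp
    next
      case False
      hence "t \<in> nn x y" using t(1) ft by (auto simp: nn_iff)
      hence "c (f t) \<in> c ` f ` nn x y" by blast
      hence "c (f u) \<in> c ` f ` nn x y" by (simp only: ft(1))
      hence "u \<in> c ` f ` nn x y" by (simp only: cu(1))
      thus ?thesis using nc by blast
    qed
  next
    case False
    hence ft: "f t = f v" "adj E y t" using t by auto
    show ?thesis
    proof (cases "adj E x t")
      case True
      hence "t \<in> N x \<inter> N y" using ft by (simp add: N_iff)
      hence "t = c (f t)" using uniq by simp
      also have "\<dots> = c (f v)" by (simp only: ft(1))
      also have "\<dots> = v" by (rule cu(2))
      finally show ?thesis by simp
    next
      case False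
      hence "t \<in> nn y x" using t(1) ft by (auto simp: nn_iff)
      hence "c (f t) \<in> c ` f ` nn x y" using AeqB by blast
      hence "c (f v) \<in> c ` f ` nn x y" by (simp only: ft(1))
      hence "v \<in> c ` f ` nn x y" by (simp only: cu(2))
      thus ?thesis using nc by blast
    qed
  qed
  show False
  proof (rule RL2[OF xy f fu(1) fu(2) fuv])
    show "\<forall>t1\<in>V-{x,y}. \<forall>t2\<in>V-{x,y}. ((f t1 = f u \<and> adj E x t1) \<or> (f t1 = f v \<and> adj E y t1)) \<longrightarrow>
               ((f t2 = f u \<and> adj E x t2) \<or> (f t2 = f v \<and> adj E y t2)) \<longrightarrow> \<not> adj E t1 t2"
    proof (intro ballI impI)
      fix t1 t2 assume t: "t1 \<in> V-{x,y}" "t2 \<in> V-{x,y}"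
        "(f t1 = f u \<and> adj E x t1) \<or> (f t1 = f v \<and> adj E y t1)"
        "(f t2 = f u \<and> adj E x t2) \<or> (f t2 = f v \<and> adj E y t2)"
      have "t1 \<in> {u,v}" by (rule S[OF t(1) t(3)])
      moreover have "t2 \<in> {u,v}" by (rule S[OF t(2) t(4)])
      ultimately show "\<not> adj E t1 t2" using uv adj_irrefl adj_sym by auto
    qed
  qed
qed


lemma Wl:
  assumes a: "a \<in> nn x y" and a': "a' \<in> nn x y" and aa: "a \<noteq> a'"
  shows "\<exists>w. nn x (c (f a)) = {a, w} \<and> w \<noteq> a \<and> w \<in> N x \<inter> N y"
proof -
  define cc where "cc = c (f a)"
  note ai = inA[OF a]
  have cr: "cc \<in> V - {x,y}" "f cc = f a" "adj E x cc" "adj E y cc"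
    using crep ai unfolding cc_def by auto
  have g1: "nn x a = {y, cc}" "cc \<noteq> a" "\<not> adj E a cc" using G1[OF a] unfolding cc_def by auto
  have ccN: "cc \<in> N x" "cc \<in> N y" using cr by (auto simp: N_iff)
  have "a \<in> nn x cc" using ai g1 adj_sym by (auto simp: nn_iff)
  then obtain w where w: "nn x cc = {a, w}" "w \<noteq> a" using nn2[OF dx ccN(1)] by blast
  have wi: "adj E x w" "w \<noteq> cc" "\<not> adj E cc w" using w nn_iff by blast+
  have wy: "w \<noteq> y" using wi(3) adjs[OF cr(4)] by blast
  have "w \<noteq> a'"
  proof
    assume "w = a'"
    hence "cc \<in> nn x a'" using cr wi adj_sym by (auto simp: nn_iff)
    hence "cc = y \<or> cc = c (f a')" using G1[OF a'] by blast
    thus False using cr G2[OF a a' aa] unfolding cc_def by auto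
  qed
  hence "w \<notin> nn x y" using w(2) cA a a' aa
    by (metis card_2_iff insertE singletonD)
  hence "adj E y w" using wi wy by (auto simp: nn_iff)
  hence "w \<in> N x \<inter> N y" using wi by (auto simp: N_iff)
  thus ?thesis using w unfolding cc_def by blast
qed

lemma final: False
proof -
  obtain a1 a2 where A: "nn x y = {a1,a2}" "a1 \<noteq> a2" using cA unfolding card_2_iff by blast
  have a1: "a1 \<in> nn x y" and a2: "a2 \<in> nn x y" using A by auto
  note a1i = inA[OF a1] and a2i = inA[OF a2]
  have adj12: "adj E a1 a2" using adjA a1 a2 A by blast
  define c1 where "c1 = c (f a1)"
  define c2 where "c2 = c (f a2)"
  have c12: "c1 \<noteq> c2" using G2[OF a1 a2 A(2)] unfolding c1_def c2_def by blast
  have cfA: "c ` f ` nn x y = {c1, c2}" unfolding A c1_def c2_def by auto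
  have g1: "nn x a1 = {y, c1}" "nn x a2 = {y, c2}" using G1[OF a1] G1[OF a2] unfolding c1_def c2_def by auto
  obtain w1 where w1: "nn x c1 = {a1, w1}" "w1 \<noteq> a1" "w1 \<in> N x \<inter> N y"
    using Wl[OF a1 a2 A(2)] unfolding c1_def by blast
  obtain w2 where w2: "nn x c2 = {a2, w2}" "w2 \<noteq> a2" "w2 \<in> N x \<inter> N y"
    using Wl[OF a2 a1 A(2)[symmetric]] unfolding c2_def by blast
  have cr1: "c1 \<in> N x \<inter> N y" "c2 \<in> N x \<inter> N y" using crep a1i a2i unfolding c1_def c2_def
    by (auto simp: N_iff)
  have Cm: "t \<in> N x \<inter> N y" if "t \<in> N x" "t \<noteq> y" "t \<noteq> a1" "t \<noteq> a2" for t
  proof -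
    have "t \<notin> nn x y" using that A by blast
    hence "adj E y t" using that by (auto simp: nn_iff N_iff)
    thus ?thesis using that by (auto simp: N_iff)
  qed
  have notA: "t \<in> N x \<inter> N y \<Longrightarrow> t \<noteq> a1 \<and> t \<noteq> a2" for t using a1i a2i by (auto simp: N_iff)
  have pair: "(P = c1 \<and> Q = w1) \<or> (P = c2 \<and> Q = w2) \<or> (Q = c1 \<and> P = w1) \<or> (Q = c2 \<and> P = w2)"
    if PQ: "P \<in> N x \<inter> N y" "Q \<in> N x \<inter> N y" "P \<noteq> Q" "\<not> adj E P Q" for P Q
  proof -
    have "P \<in> {c1,c2} \<or> Q \<in> {c1,c2}" using Kf[OF PQ] cfA by simp
    moreover have "Q \<in> nn x P" "P \<in> nn x Q" using PQ adj_sym by (auto simp: nn_iff N_iff)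
    ultimately show ?thesis using w1 w2 notA PQ by auto
  qed
  obtain p q r s where pqrs: "p \<in> N x - {a1,a2}" "q \<in> N x - {a1,a2}" "r \<in> N x - {a1,a2}" "s \<in> N x - {a1,a2}"
     "p \<noteq> q" "p \<noteq> r" "p \<noteq> s" "q \<noteq> r" "q \<noteq> s" "r \<noteq> s" "\<not> adj E p q" "\<not> adj E r s"
    using F4[OF dx a1i[THEN conjunct2, THEN conjunct2, THEN conjunct2, THEN conjunct2] 
        a2i[THEN conjunct2, THEN conjunct2, THEN conjunct2, THEN conjunct2] adj12] by blast
  have ny: "t \<noteq> y" if "t \<in> N x - {a1,a2}" "t' \<in> N x - {a1,a2}" "t \<noteq> t'" "\<not> adj E t t' \<or> \<not> adj E t' t" for t t'
  proof
    assume "t = y"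
    hence "\<not> adj E y t'" using that adj_sym by auto
    hence "t' \<in> nn x y" using that \<open>t = y\<close> by (auto simp: nn_iff N_iff)
    thus False using that A by blast
  qed
  have "p \<noteq> y" "q \<noteq> y" "r \<noteq> y" "s \<noteq> y"
    using ny[of p q] ny[of q p] ny[of r s] ny[of s r] pqrs by auto
  hence inC: "p \<in> N x \<inter> N y" "q \<in> N x \<inter> N y" "r \<in> N x \<inter> N y" "s \<in> N x \<inter> N y"
    using Cm pqrs by auto
  have pq: "(p = c1 \<and> q = w1) \<or> (p = c2 \<and> q = w2) \<or> (q = c1 \<and> p = w1) \<or> (q = c2 \<and> p = w2)"
    using pair[OF inC(1,2) pqrs(5,11)] .
  have rs: "(r = c1 \<and> s = w1) \<or> (r = c2 \<and> s = w2) \<or> (s = c1 \<and> r = w1) \<or> (s = c2 \<and> r = w2)"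
    using pair[OF inC(3,4) pqrs(10,12)] .
  have ww: "w1 \<noteq> c2" "w1 \<noteq> w2" using pq rs pqrs(5-10) by auto
  have w1c1: "w1 \<noteq> c1" using w1 nn_iff by blast
  have "c1 \<in> nn x w1" using w1 nn_iff cr1 adj_sym by (auto simp: nn_iff N_iff)
  then obtain t where t: "nn x w1 = {c1, t}" "t \<noteq> c1" using nn2[OF dx] w1 by blast
  have ti: "adj E x t" "t \<noteq> w1" "\<not> adj E w1 t" using t nn_iff by blast+
  have ty: "t \<noteq> y" using ti w1 by (auto simp: N_iff adj_sym[of w1 y])
  have "t \<noteq> a1"
  proof
    assume "t = a1"
    hence "w1 \<in> nn x a1" using ti w1 adj_sym by (auto simp: nn_iff N_iff)
    thus False using g1 w1 w1c1 adj_irrefl by (auto simp: N_iff)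
  qed
  moreover have "t \<noteq> a2"
  proof
    assume "t = a2"
    hence "w1 \<in> nn x a2" using ti w1 adj_sym by (auto simp: nn_iff N_iff)
    thus False using g1 w1 ww adj_irrefl by (auto simp: N_iff)
  qed
  ultimately have tC: "t \<in> N x \<inter> N y" using Cm ty ti by (auto simp: N_iff)
  have "(w1 = c1 \<and> t = w1) \<or> (w1 = c2 \<and> t = w2) \<or> (t = c1 \<and> w1 = w1) \<or> (t = c2 \<and> w1 = w2)"
    using pair[OF w1(3) tC ti(2)[symmetric] ti(3)] .
  thus False using w1c1 ww t(2) by auto
qed

end


locale edgeII = edge +
  assumes cA0: "card (nn x y) = 0"
begin

lemma A0: "nn x y = {}" using cA0 fin_nn by simp
lemma B0: "nn y x = {}"
proof -
  have "card (nn y x) = 0" using cA0 cardAB by simp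
  thus ?thesis using fin_nn[of y x] by simp
qed

definition C where "C = N x - {y}"

lemma Ceq: "N y - {x} = C"
proof
  show "N y - {x} \<subseteq> C"
  proof
    fix v assume v: "v \<in> N y - {x}"
    hence "v \<notin> nn y x" using B0 by blast
    hence "adj E x v" using v unfolding nn_def by blast
    moreover have "v \<noteq> y" using v adj_irrefl by (auto simp: N_iff)
    ultimately show "v \<in> C" unfolding C_def by (simp add: N_iff)
  qed
  show "C \<subseteq> N y - {x}"
  proof
    fix v assume v: "v \<in> C"
    hence v2: "v \<in> N x" "v \<noteq> y" unfolding C_def by auto
    have "v \<notin> nn x y" using A0 by blast
    hence "adj E y v" using v2 unfolding nn_def by blast
    moreover have "v \<noteq> x" using v2 adj_irrefl by (auto simp: N_iff)
    ultimately show "v \<in> N y - {x}" by (simp add: N_iff)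
  qed
qed

lemma CV: "v \<in> C \<Longrightarrow> v \<in> V - {x,y}" using NV[of v] by (simp add: C_def)
lemma Cy: "v \<in> C \<Longrightarrow> adj E y v"
proof -
  assume "v \<in> C"
  hence "v \<in> N y - {x}" using Ceq by simp
  thus ?thesis by (simp add: N_iff)
qed
lemma CN: "v \<in> C \<Longrightarrow> v \<in> N x" by (simp add: C_def)
lemma finC: "finite C" using finN by (simp add: C_def)

definition cls where "cls i = {v \<in> C. f v = i}"

lemma fin_cls: "finite (cls i)" using finC by (simp add: cls_def)

lemma c_cls: "i < k-2 \<Longrightarrow> c i \<in> cls i"
  using c by (auto simp: cls_def C_def N_iff)

lemma cls_le2: "card (cls i) \<le> 2"
proof (rule ccontr)
  assume "\<not> card (cls i) \<le> 2"
  hence "2 < card (cls i)" by simp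
  then obtain p q r where pqr: "p \<in> cls i" "q \<in> cls i" "r \<in> cls i" "p \<noteq> q" "p \<noteq> r" "q \<noteq> r"
    using three[OF fin_cls] by blast
  have in1: "p \<in> N x" "q \<in> N x" "r \<in> N x" using pqr by (auto simp: cls_def C_def)
  have in2: "p \<in> V-{x,y}" "q \<in> V-{x,y}" "r \<in> V-{x,y}" "f p = i" "f q = i" "f r = i"
    using pqr CV by (auto simp: cls_def)
  have "\<not> adj E p q" using fp[OF in2(1) in2(2)] in2 by auto
  moreover have "\<not> adj E p r" using fp[OF in2(1) in2(3)] in2 by auto
  moreover have "\<not> adj E q r" using fp[OF in2(2) in2(3)] in2 by auto
  ultimately show False using F2[OF dx in1] pqr by blast
qed

lemma cls_ge1: "i < k-2 \<Longrightarrow> 1 \<le> card (cls i)"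
proof -
  assume "i < k-2"
  hence "cls i \<noteq> {}" using c_cls by blast
  hence "0 < card (cls i)" using fin_cls by (simp add: card_gt_0_iff)
  thus ?thesis by simp
qed

lemma sumcls: "(\<Sum>i<k-2. card (cls i)) = k"
proof -
  have fC: "f ` C = {..<k-2}"
  proof
    show "f ` C \<subseteq> {..<k-2}" using fb CV by auto
    show "{..<k-2} \<subseteq> f ` C"
    proof
      fix i assume "i \<in> {..<k-2}"
      hence "c i \<in> cls i" using c_cls by simp
      hence "c i \<in> C" "f (c i) = i" by (auto simp: cls_def)
      thus "i \<in> f ` C" by force
    qed
  qed
  have "card C = (\<Sum>t\<in>C. 1)" by simp
  also have "\<dots> = (\<Sum>i\<in>f ` C. (\<Sum>t\<in>{t\<in>C. f t = i}. 1))"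
    by (rule sum.image_gen[OF finC])
  also have "\<dots> = (\<Sum>i<k-2. card (cls i))" by (simp add: fC cls_def)
  finally have "card C = (\<Sum>i<k-2. card (cls i))" .
  moreover have "card C = k" using dx yN finN by (simp add: C_def)
  ultimately show ?thesis by simp
qed

definition I2 where "I2 = {i. i < k-2 \<and> card (cls i) = 2}"

lemma cI2: "card I2 = 2"
proof -
  have eq: "card (cls i) = 1 + (if card (cls i) = 2 then 1 else 0)" if "i < k-2" for i
    using cls_le2[of i] cls_ge1[OF that] by auto
  have "k = (\<Sum>i<k-2. card (cls i))" using sumcls by simp
  also have "\<dots> = (\<Sum>i<k-2. 1 + (if card (cls i) = 2 then 1 else 0))"
    by (rule sum.cong) (auto simp: eq)
  also have "\<dots> = (k-2) + (\<Sum>i<k-2. (if card (cls i) = 2 then 1 else 0))"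
    by (subst sum.distrib) simp
  also have "(\<Sum>i<k-2. (if card (cls i) = 2 then (1::nat) else 0)) = card I2"
    unfolding I2_def using sum.inter_filter[of "{..<k-2}" "\<lambda>_. (1::nat)" "\<lambda>i. card (cls i) = 2"]
    by (simp add: lessThan_def)
  finally show ?thesis using kk by linarith
qed

lemma Kf2:
  assumes u: "u \<in> C" and v: "v \<in> C" and uv: "u \<noteq> v" "\<not> adj E u v"
  shows "card (cls (f u)) = 2 \<or> card (cls (f v)) = 2"
proof (rule ccontr)
  assume nc: "\<not> (card (cls (f u)) = 2 \<or> card (cls (f v)) = 2)"
  have uV: "u \<in> V - {x,y}" and vV: "v \<in> V - {x,y}" using u v CV by auto
  have fu: "f u < k-2" "f v < k-2" using fb uV vV by auto
  have c1: "card (cls (f u)) = 1" using nc cls_le2[of "f u"] cls_ge1[OF fu(1)] by linarith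
  have c2: "card (cls (f v)) = 1" using nc cls_le2[of "f v"] cls_ge1[OF fu(2)] by linarith
  have uu: "u \<in> cls (f u)" "v \<in> cls (f v)" using u v by (auto simp: cls_def)
  obtain w1 where w1: "cls (f u) = {w1}" using card_1_singletonE[OF c1] by blast
  have "u \<in> {w1}" using uu(1) unfolding w1 .
  hence uw1: "u = w1" by simp
  have cu1: "cls (f u) = {u}"
  proof -
    have "cls (f u) = {w1}" by (rule w1)
    also have "{w1} = {u}" using uw1 by simp
    finally show ?thesis .
  qed
  obtain w2 where w2: "cls (f v) = {w2}" using card_1_singletonE[OF c2] by blast
  have "v \<in> {w2}" using uu(2) unfolding w2 .
  hence vw2: "v = w2" by simp
  have cu2: "cls (f v) = {v}"
  proof -
    have "cls (f v) = {w2}" by (rule w2)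
    also have "{w2} = {v}" using vw2 by simp
    finally show ?thesis .
  qed
  note cu = cu1 cu2
  have fuv: "f u \<noteq> f v"
  proof
    assume e: "f u = f v"
    have "v \<in> cls (f v)" by (rule uu(2))
    hence "v \<in> cls (f u)" by (simp only: e)
    hence "v \<in> {u}" by (simp only: cu1)
    thus False using uv by simp
  qed
  have S: "t \<in> {u,v}" if t: "t \<in> V-{x,y}" "(f t = f u \<and> adj E x t) \<or> (f t = f v \<and> adj E y t)" for t
  proof (cases "f t = f u \<and> adj E x t")
    case True
    hence "t \<in> C" using t by (auto simp: C_def N_iff)
    hence "t \<in> cls (f u)" using True by (auto simp: cls_def)
    thus ?thesis using cu by blast
  next
    case False
    hence ft: "f t = f v" "adj E y t" using t by auto
    hence "t \<in> N y - {x}" using t by (auto simp: N_iff)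
    hence "t \<in> C" using Ceq by simp
    hence "t \<in> cls (f v)" using ft by (auto simp: cls_def)
    thus ?thesis using cu by blast
  qed
  show False
  proof (rule RL2[OF xy f fu(1) fu(2) fuv])
    show "\<forall>t1\<in>V-{x,y}. \<forall>t2\<in>V-{x,y}. ((f t1 = f u \<and> adj E x t1) \<or> (f t1 = f v \<and> adj E y t1)) \<longrightarrow>
               ((f t2 = f u \<and> adj E x t2) \<or> (f t2 = f v \<and> adj E y t2)) \<longrightarrow> \<not> adj E t1 t2"
    proof (intro ballI impI)
      fix t1 t2 assume t: "t1 \<in> V-{x,y}" "t2 \<in> V-{x,y}"
        "(f t1 = f u \<and> adj E x t1) \<or> (f t1 = f v \<and> adj E y t1)"
        "(f t2 = f u \<and> adj E x t2) \<or> (f t2 = f v \<and> adj E y t2)"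
      have "t1 \<in> {u,v}" by (rule S[OF t(1) t(3)])
      moreover have "t2 \<in> {u,v}" by (rule S[OF t(2) t(4)])
      ultimately show "\<not> adj E t1 t2" using uv adj_irrefl adj_sym by auto
    qed
  qed
qed


lemma inC: "t \<in> N x \<Longrightarrow> t \<noteq> y \<Longrightarrow> t \<in> C" by (simp add: C_def)

lemma final2: False
proof -
  obtain i1 i2 where I: "I2 = {i1,i2}" "i1 \<noteq> i2" using cI2 unfolding card_2_iff by blast
  have i1: "i1 < k-2" "card (cls i1) = 2" and i2: "i2 < k-2" "card (cls i2) = 2"
    using I unfolding I2_def by blast+
  obtain p1 p1' where P1: "cls i1 = {p1,p1'}" "p1 \<noteq> p1'" using i1(2) unfolding card_2_iff by blast
  obtain p2 p2' where P2: "cls i2 = {p2,p2'}" "p2 \<noteq> p2'" using i2(2) unfolding card_2_iff by blast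
  have m1: "p1 \<in> C" "p1' \<in> C" "f p1 = i1" "f p1' = i1" using P1 by (auto simp: cls_def)
  have m2: "p2 \<in> C" "p2' \<in> C" "f p2 = i2" "f p2' = i2" using P2 by (auto simp: cls_def)
  have dd: "p1 \<noteq> p2" "p1 \<noteq> p2'" "p1' \<noteq> p2" "p1' \<noteq> p2'" using m1 m2 I(2) by auto
  have inP: "t \<in> {p1,p1',p2,p2'}" if t: "t \<in> C" "card (cls (f t)) = 2" for t
  proof -
    have "f t < k-2" using fb CV t by blast
    hence "f t \<in> I2" using t by (simp add: I2_def)
    hence "f t = i1 \<or> f t = i2" using I by blast
    moreover have "t \<in> cls (f t)" using t by (simp add: cls_def)
    ultimately show ?thesis using P1 P2 by auto
  qed
  have na1: "\<not> adj E p1 p1'" using fp CV m1 by metis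
  have na2: "\<not> adj E p2 p2'" using fp CV m2 by metis
  have N1: "p1 \<in> N x" "p1' \<in> N x" "p2 \<in> N x" "p2' \<in> N x" using m1 m2 CN by auto
  have "p1 \<in> nn x p1'" using N1 P1 na1 adj_sym by (auto simp: nn_def)
  then obtain b where b: "nn x p1' = {p1, b}" "b \<noteq> p1" using nn2[OF dx N1(2)] by blast
  have "p1' \<in> nn x p1" using N1 P1 na1 by (auto simp: nn_def)
  then obtain g where g: "nn x p1 = {p1', g}" "g \<noteq> p1'" using nn2[OF dx N1(1)] by blast
  have "p2' \<in> nn x p2" using N1 P2 na2 by (auto simp: nn_def)
  then obtain e where e: "nn x p2 = {p2', e}" "e \<noteq> p2'" using nn2[OF dx N1(3)] by blast
  have "p2 \<in> nn x p2'" using N1 P2 na2 adj_sym by (auto simp: nn_def)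
  then obtain e' where e': "nn x p2' = {p2, e'}" "e' \<noteq> p2" using nn2[OF dx N1(4)] by blast
  have bi: "b \<in> N x" "b \<noteq> p1'" "\<not> adj E p1' b" using b unfolding nn_def by auto
  have adjb: "adj E p1 b"
  proof (rule ccontr)
    assume "\<not> adj E p1 b"
    thus False using F2[OF dx N1(2) N1(1) bi(1)] P1(2) bi b(2) na1 adj_sym by metis
  qed
  obtain p q r s where pqrs: "p \<in> N x - {p1,b}" "q \<in> N x - {p1,b}" "r \<in> N x - {p1,b}" "s \<in> N x - {p1,b}"
     "p \<noteq> q" "p \<noteq> r" "p \<noteq> s" "q \<noteq> r" "q \<noteq> s" "r \<noteq> s" "\<not> adj E p q" "\<not> adj E r s"
    using F4[OF dx N1(1) bi(1) adjb] by blast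
  have good: "P \<in> C \<and> Q \<in> C \<and> P \<noteq> p1' \<and> Q \<noteq> p1'"
    if PQ: "P \<in> N x - {p1,b}" "Q \<in> N x - {p1,b}" "P \<noteq> Q" "\<not> adj E P Q" for P Q
  proof -
    have "P \<noteq> y"
    proof
      assume "P = y"
      moreover have "Q \<noteq> y" using PQ \<open>P = y\<close> by auto
      ultimately show False using Cy[OF inC[of Q]] PQ by auto
    qed
    moreover have "Q \<noteq> y"
    proof
      assume "Q = y"
      moreover have "P \<noteq> y" using PQ \<open>Q = y\<close> by auto
      ultimately show False using Cy[OF inC[of P]] PQ adj_sym by auto
    qed
    moreover have "P \<noteq> p1'"
    proof
      assume "P = p1'"
      hence "Q \<in> nn x p1'" using PQ by (auto simp: nn_def)
      thus False using b PQ by auto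
    qed
    moreover have "Q \<noteq> p1'"
    proof
      assume "Q = p1'"
      hence "P \<in> nn x p1'" using PQ adj_sym by (auto simp: nn_def)
      thus False using b PQ by auto
    qed
    ultimately show ?thesis using inC PQ by auto
  qed
  have pair: "(P = p2 \<and> (Q = p2' \<or> Q = e)) \<or> (P = p2' \<and> (Q = p2 \<or> Q = e')) \<or>
              (Q = p2 \<and> (P = p2' \<or> P = e)) \<or> (Q = p2' \<and> (P = p2 \<or> P = e'))"
    if PQ: "P \<in> N x - {p1,b}" "Q \<in> N x - {p1,b}" "P \<noteq> Q" "\<not> adj E P Q" for P Q
  proof -
    note gd = good[OF PQ]
    have "card (cls (f P)) = 2 \<or> card (cls (f Q)) = 2" using Kf2 gd PQ by blast
    hence "P \<in> {p1,p1',p2,p2'} \<or> Q \<in> {p1,p1',p2,p2'}" using inP gd by blast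
    hence "P \<in> {p2,p2'} \<or> Q \<in> {p2,p2'}" using gd PQ by auto
    moreover have "Q \<in> nn x P" "P \<in> nn x Q" using PQ adj_sym by (auto simp: nn_def)
    ultimately show ?thesis using e e' by auto
  qed
  have pq: "(p = p2 \<and> (q = p2' \<or> q = e)) \<or> (p = p2' \<and> (q = p2 \<or> q = e')) \<or>
              (q = p2 \<and> (p = p2' \<or> p = e)) \<or> (q = p2' \<and> (p = p2 \<or> p = e'))"
    using pair[OF pqrs(1,2,5,11)] .
  have rs: "(r = p2 \<and> (s = p2' \<or> s = e)) \<or> (r = p2' \<and> (s = p2 \<or> s = e')) \<or>
              (s = p2 \<and> (r = p2' \<or> r = e)) \<or> (s = p2' \<and> (r = p2 \<or> r = e'))"
    using pair[OF pqrs(3,4,10,12)] .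
  have ee: "e \<noteq> e'" "e \<noteq> p2'" "e' \<noteq> p2" "e \<in> {p,q,r,s}" "e' \<in> {p,q,r,s}"
    using pq rs pqrs(5-10) by auto
  have inS: "t \<in> C \<and> t \<noteq> p1 \<and> t \<noteq> b \<and> t \<noteq> p1'" if "t \<in> {p,q,r,s}" for t
    using that good[OF pqrs(1,2,5,11)] good[OF pqrs(3,4,10,12)] pqrs(1-4) by auto
  have key: "W = g" if EZ: "W \<in> C" "W \<noteq> p1" "W \<noteq> p1'" "W \<noteq> b" "W \<noteq> p2" "W \<noteq> p2'"
      "{Z, Z'} = {p2,p2'}" "Z \<noteq> Z'" "\<not> adj E W Z" "W \<notin> nn x Z'" for W Z Z'
  proof -
    have EN: "W \<in> N x" using EZ CN by auto
    have ZN: "Z \<in> N x" "Z' \<in> N x" using EZ(7) N1 by auto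
    have "Z \<in> nn x W" using EZ ZN by (auto simp: nn_def)
    then obtain t where t: "nn x W = {Z, t}" "t \<noteq> Z" using nn2[OF dx EN] by blast
    have ti: "t \<in> N x" "t \<noteq> W" "\<not> adj E W t" using t unfolding nn_def by auto
    have "t \<noteq> y" using ti Cy[OF EZ(1)] by (auto simp: adj_sym[of W y])
    hence tC: "t \<in> C" using inC ti by blast
    have "card (cls (f W)) \<noteq> 2"
    proof
      assume "card (cls (f W)) = 2"
      hence "W \<in> {p1,p1',p2,p2'}" using inP EZ by blast
      thus False using EZ by auto
    qed
    hence "card (cls (f t)) = 2" using Kf2[OF EZ(1) tC ti(2)[symmetric] ti(3)] by blast
    hence tP: "t \<in> {p1,p1',p2,p2'}" using inP tC by blast
    have Et: "W \<in> nn x t" using ti EN adj_sym by (auto simp: nn_def)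
    have "t \<noteq> Z'" using Et EZ(10) by blast
    moreover have "t \<noteq> p1'" using Et b EZ by auto
    moreover have "t \<noteq> p2" "t \<noteq> p2'" using t(2) \<open>t \<noteq> Z'\<close> EZ(7) by auto
    ultimately have "t = p1" using tP by blast
    thus "W = g" using Et g EZ by auto
  qed
  have eC: "e \<in> C" "e \<noteq> p1" "e \<noteq> p1'" "e \<noteq> b" using inS ee by auto
  have e'C: "e' \<in> C" "e' \<noteq> p1" "e' \<noteq> p1'" "e' \<noteq> b" using inS ee by auto
  have ne: "\<not> adj E e p2" "e \<noteq> p2" using e adj_sym unfolding nn_def by auto
  have ne': "\<not> adj E e' p2'" "e' \<noteq> p2'" using e' adj_sym unfolding nn_def by auto
  have "e = g"
    by (rule key[of e p2 p2']) (use eC ne ee e' P2 in auto)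
  moreover have "e' = g"
    by (rule key[of e' p2' p2]) (use e'C ne' ee e P2 in auto)
  ultimately show False using ee by simp
qed

end


lemma (in dcg) main:
  assumes xy: "adj E x y" and dx: "card (N x) = Suc k" and dy: "card (N y) = Suc k"
  shows False
proof -
  obtain f where f: "col2 x y f" using ex_col2 xy by blast
  obtain c where c: "\<forall>i<k-2. c i \<in> V-{x,y} \<and> f (c i) = i \<and> adj E x (c i) \<and> adj E y (c i)"
    using rep[OF xy f] by blast
  interpret ed: edge V E k x y f c
    by (unfold_locales) (use xy dx dy f c in auto)
  show False
  proof (cases "card (nn x y) = 2")
    case True
    interpret eI: edgeI V E k x y f c by (unfold_locales) (rule True)
    show False by (rule eI.final)
  next
    case False
    hence "card (nn x y) = 0" using ed.cases02 by blast
    then interpret eII: edgeII V E k x y f c by (unfold_locales)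
    show False by (rule eII.final2)
  qed
qed

theorem theorem15:
  fixes V :: "'a set" and E :: "'a set set" and k :: nat
  assumes "graph V E"
    and "double_critical V E"
    and "chromatic_number V E = k"
    and "\<not> complete_graph V E"
  shows "\<not> (\<exists>x\<in>V. \<exists>y\<in>V. adj E x y \<and> degree V E x = k + 1 \<and> degree V E y = k + 1)"
proof
  assume "\<exists>x\<in>V. \<exists>y\<in>V. adj E x y \<and> degree V E x = k + 1 \<and> degree V E y = k + 1"
  then obtain x y where xy: "x \<in> V" "y \<in> V" "adj E x y" "degree V E x = k + 1" "degree V E y = k + 1"
    by blast
  interpret d: dcg V E k by (unfold_locales) (use assms in auto)
  have "card (d.N x) = Suc k" "card (d.N y) = Suc k"
    using xy unfolding d.N_def degree_def by simp_all
  thus False using d.main[OF xy(3)] by blast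
qed

end
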